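(* The optimal value function $J^*$ defined in the context is $L_1$-Lipschitz continuous on $\mathcal X$, with $L_1=\frac{\beta+\bar\rho}{4(1-\gamma\bar a)}\Big(1+\frac{2\gamma}{1-\gamma}\Big)$.
   Context: Patient model: $M$ treatments; $\mathcal U:=\{v\in\{0,1\}^M:\|v\|_0\leq1\}$. Dynamics $f(x,u,d,w)=ax+b^\top u+c^\top d+w$ with adherence $d^i\mid x,u^i\sim\mathrm{Bernoulli}(u^i\sigma(x+\mu_i))$, $\sigma$ the sigmoid; true parameters satisfy $a\in[0,\bar a]$ (known $\bar a\in(0,1)$), $\|b\|_\infty\leq\bar b$, $\|c\|_\infty\leq\bar c$, $\mu\in[-\bar\mu,\bar\mu]^M$. Noise i.i.d., zero-symmetric, $\sigma_s^2$-subgaussian, $|w|\leq\bar w$ ($\bar w>0$), log-concave density, known variance. $C_x:=\frac{\bar b+\bar c+\bar w}{1-\bar a}$, $\mathcal X:=[-C_x,C_x]$. Reward $r(x,u,d)=-\beta\sigma(\beta_0-x)+\sum_i\rho_id_i$ with known $\rho_i\in[0,\bar\rho]$, $\beta\geq0$, $\beta_0\in\mathbb R$; discount $\gamma\in(0,1)$. $J^*$ is the unique bounded fixed point on $\mathcal X$ of $\mathcal TJ(x)=\max_{u\in\mathcal U}\mathbf E[r(x,u,d)+\gamma J(f(x,u,d,w))]$, expectation over $d$ and $w$ under the true parameters (the optimal infinite-horizon discounted value function). *)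

theory Defs
  imports "HOL-Probability.Probability"
begin

definition sigmoid :: "real \<Rightarrow> real" where
  "sigmoid t = 1 / (1 + exp (- t))"

text \<open>Action set U = {v in {0,1}^M : ||v||_0 <= 1}; vectors in R^M are functions
  nat => real supported on {..<M}.\<close>
definition actions :: "nat \<Rightarrow> (nat \<Rightarrow> real) set" where
  "actions M = {u. (\<forall>i<M. u i \<in> {0, 1}) \<and> (\<forall>i. M \<le> i \<longrightarrow> u i = 0)
                  \<and> card {i. i < M \<and> u i \<noteq> 0} \<le> 1}"

text \<open>Distribution of the adherence vector d given x and u: components independent,
  d_i ~ Bernoulli(u_i * sigmoid(x + mu_i)); d_i = True encodes d_i = 1.\<close>
definition adherence :: "nat \<Rightarrow> (nat \<Rightarrow> real) \<Rightarrow> real \<Rightarrow> (nat \<Rightarrow> real) \<Rightarrow> (nat \<Rightarrow> bool) pmf" where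
  "adherence M \<mu> x u = Pi_pmf {..<M} False (\<lambda>i. bernoulli_pmf (u i * sigmoid (x + \<mu> i)))"

definition dyn :: "nat \<Rightarrow> real \<Rightarrow> (nat \<Rightarrow> real) \<Rightarrow> (nat \<Rightarrow> real) \<Rightarrow> real \<Rightarrow> (nat \<Rightarrow> real)
                   \<Rightarrow> (nat \<Rightarrow> bool) \<Rightarrow> real \<Rightarrow> real" where
  "dyn M a b c x u d w = a * x + (\<Sum>i<M. b i * u i) + (\<Sum>i<M. c i * of_bool (d i)) + w"

definition reward :: "nat \<Rightarrow> real \<Rightarrow> real \<Rightarrow> (nat \<Rightarrow> real) \<Rightarrow> real \<Rightarrow> (nat \<Rightarrow> bool) \<Rightarrow> real" where
  "reward M \<beta> \<beta>0 \<rho> x d = - \<beta> * sigmoid (\<beta>0 - x) + (\<Sum>i<M. \<rho> i * of_bool (d i))"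

text \<open>Bellman operator; the noise w has Lebesgue density g, so E_w[h(w)] = LINT w. g w * h w.\<close>
definition bellman ::
  "nat \<Rightarrow> real \<Rightarrow> (nat \<Rightarrow> real) \<Rightarrow> (nat \<Rightarrow> real) \<Rightarrow> (nat \<Rightarrow> real) \<Rightarrow> (real \<Rightarrow> real)
   \<Rightarrow> real \<Rightarrow> real \<Rightarrow> (nat \<Rightarrow> real) \<Rightarrow> real \<Rightarrow> (real \<Rightarrow> real) \<Rightarrow> real \<Rightarrow> real" where
  "bellman M a b c \<mu> g \<beta> \<beta>0 \<rho> \<gamma> J x =
     Max ((\<lambda>u. measure_pmf.expectation (adherence M \<mu> x u)
                 (\<lambda>d. reward M \<beta> \<beta>0 \<rho> x d
                      + \<gamma> * (LINT w|lborel. g w * J (dyn M a b c x u d w)))) ` actions M)"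

definition log_concave :: "(real \<Rightarrow> real) \<Rightarrow> bool" where
  "log_concave g \<longleftrightarrow> (\<forall>x y t. 0 \<le> t \<longrightarrow> t \<le> 1 \<longrightarrow>
       g x powr t * g y powr (1 - t) \<le> g (t * x + (1 - t) * y))"

end

theory Submission
  imports Defs
begin


lemma sigmoid_bounds: "0 < sigmoid t" "sigmoid t < 1"
  unfolding sigmoid_def by (auto simp: divide_simps add_pos_pos)

lemma adh_eq:
  assumes iM: "i < M" and u0: "\<forall>j. j \<noteq> i \<longrightarrow> u j = 0"
  shows "adherence M \<mu> x u = map_pmf (\<lambda>b j. j = i \<and> b) (bernoulli_pmf (u i * sigmoid (x + \<mu> i)))"
proof -
  define A where "A = adherence M \<mu> x u"
  have supp: "d = (\<lambda>j. j = i \<and> d i)" if d: "d \<in> set_pmf A" for d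
  proof
    fix j show "d j = (j = i \<and> d i)"
    proof (cases "j = i")
      case False
      show ?thesis
      proof (cases "j < M")
        case True
        have "d j \<in> set_pmf (map_pmf (\<lambda>f. f j) A)" using d by auto
        also have "map_pmf (\<lambda>f. f j) A = bernoulli_pmf 0"
          unfolding A_def adherence_def using Pi_pmf_component[of "{..<M}" j False] True False u0 by simp
        finally have "d j \<in> set_pmf (bernoulli_pmf 0)" .
        then have "d j \<noteq> True" by (auto simp: set_pmf_iff)
        then show ?thesis using False by simp
      next
        case nj: False
        have "d j = False" using set_Pi_pmf_subset[of "{..<M}" False] d nj unfolding A_def adherence_def by auto
        then show ?thesis using False by simp
      qed
    qed simp
  qed
  have "A = map_pmf (\<lambda>d j. j = i \<and> d i) A"
    by (subst map_pmf_cong[OF refl supp, symmetric]) auto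
  also have "\<dots> = map_pmf (\<lambda>b j. j = i \<and> b) (map_pmf (\<lambda>d. d i) A)" by (simp add: pmf.map_comp o_def)
  also have "map_pmf (\<lambda>d. d i) A = bernoulli_pmf (u i * sigmoid (x + \<mu> i))"
    unfolding A_def adherence_def using Pi_pmf_component[of "{..<M}" i False] iM by simp
  finally show ?thesis unfolding A_def .
qed




definition Hf :: "(real \<Rightarrow> real) \<Rightarrow> (real \<Rightarrow> real) \<Rightarrow> real \<Rightarrow> real" where
  "Hf g J z = (LINT w|lborel. g w * J (z + w))"

lemma act_single:
  assumes "u \<in> actions M" "0 < M"
  shows "\<exists>i<M. \<forall>j. j \<noteq> i \<longrightarrow> u j = 0"
proof -
  define S where "S = {i. i < M \<and> u i \<noteq> 0}"
  have fin: "finite S" unfolding S_def by auto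
  have c: "card S \<le> Suc 0" using assms unfolding actions_def S_def by auto
  have one: "\<forall>p\<in>S. \<forall>q\<in>S. p = q" using c fin card_le_Suc0_iff_eq by blast
  show ?thesis
  proof (cases "S = {}")
    case True
    then have "\<forall>j. u j = 0" using assms(1) unfolding S_def actions_def by (metis (mono_tags, lifting) empty_iff mem_Collect_eq not_le)
    then show ?thesis using assms(2) by blast
  next
    case False
    then obtain i where i: "i \<in> S" by auto
    then show ?thesis using one assms(1) unfolding S_def actions_def
      by (intro exI[of _ i]) (metis (mono_tags, lifting) mem_Collect_eq not_le)
  qed
qed

lemma Q_eq:
  assumes iM: "i < M" and u0: "\<forall>j. j \<noteq> i \<longrightarrow> u j = 0" and ui: "u i \<in> {0,1}"
  shows "measure_pmf.expectation (adherence M \<mu> x u)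
                 (\<lambda>d. reward M \<beta> \<beta>0 \<rho> x d
                      + \<gamma> * (LINT w|lborel. g w * J (dyn M a b c x u d w)))
    = - \<beta> * sigmoid (\<beta>0 - x) + u i * sigmoid (x + \<mu> i) * \<rho> i
      + \<gamma> * (u i * sigmoid (x + \<mu> i) * Hf g J (a * x + b i * u i + c i)
             + (1 - u i * sigmoid (x + \<mu> i)) * Hf g J (a * x + b i * u i))"
proof -
  define p where "p = u i * sigmoid (x + \<mu> i)"
  have p01: "0 \<le> p" "p \<le> 1" using ui sigmoid_bounds[of "x + \<mu> i"] unfolding p_def by auto
  have sb: "(\<Sum>j<M. b j * u j) = b i * u i"
  proof -
    have "(\<Sum>j<M. b j * u j) = (\<Sum>j<M. if j = i then b i * u i else 0)"
      by (rule sum.cong) (auto simp: u0)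
    then show ?thesis using iM by simp
  qed
  have sc: "(\<Sum>j<M. c j * of_bool (j = i \<and> t)) = c i * of_bool t" for t
  proof -
    have "(\<Sum>j<M. c j * of_bool (j = i \<and> t)) = (\<Sum>j<M. if j = i then c i * of_bool t else 0)"
      by (rule sum.cong) auto
    then show ?thesis using iM by simp
  qed
  have sr: "(\<Sum>j<M. \<rho> j * of_bool (j = i \<and> t)) = \<rho> i * of_bool t" for t
  proof -
    have "(\<Sum>j<M. \<rho> j * of_bool (j = i \<and> t)) = (\<Sum>j<M. if j = i then \<rho> i * of_bool t else 0)"
      by (rule sum.cong) auto
    then show ?thesis using iM by simp
  qed
  have dT: "dyn M a b c x u (\<lambda>j. j = i \<and> True) w = (a * x + b i * u i + c i) + w" for w
    unfolding dyn_def sb sc[of True] by simp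
  have dF: "dyn M a b c x u (\<lambda>j. j = i \<and> False) w = (a * x + b i * u i) + w" for w
    unfolding dyn_def sb sc[of False] by simp
  show ?thesis
    unfolding adh_eq[OF iM u0] integral_map_pmf p_def[symmetric]
    using p01
    by (simp add: reward_def sr dT[simplified] dF[simplified] Hf_def algebra_simps)
qed




lemma Hf_gen:
  fixes g \<phi> :: "real \<Rightarrow> real"
  assumes g_meas: "g \<in> borel_measurable borel"
    and g_nonneg: "\<forall>w. 0 \<le> g w"
    and g_prob: "has_bochner_integral lborel g 1"
    and g_bdd: "\<forall>w. wbar < \<bar>w\<bar> \<longrightarrow> g w = 0"
    and wbar: "0 < wbar"
    and phi_meas: "\<phi> \<in> borel_measurable borel"
    and phi_bd: "\<forall>w. \<bar>w\<bar> \<le> wbar \<longrightarrow> \<bar>\<phi> w\<bar> \<le> K"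
  shows "integrable lborel (\<lambda>w. g w * \<phi> w)" "\<bar>LINT w|lborel. g w * \<phi> w\<bar> \<le> K"
proof -
  have K0: "0 \<le> K" using phi_bd[rule_format, of 0] wbar by auto
  have gi: "integrable lborel g" using g_prob by (simp add: has_bochner_integral_iff)
  have gint: "integral\<^sup>L lborel g = 1" using g_prob by (simp add: has_bochner_integral_iff)
  have Kgi: "integrable lborel (\<lambda>w. K * g w)" using gi by simp
  have pw: "\<bar>g w * \<phi> w\<bar> \<le> K * g w" for w
  proof (cases "\<bar>w\<bar> \<le> wbar")
    case True
    then have "\<bar>\<phi> w\<bar> \<le> K" using phi_bd by auto
    then show ?thesis using g_nonneg[rule_format, of w] by (simp add: abs_mult) (metis mult.commute mult_left_mono)
  next
    case False
    then show ?thesis using g_bdd g_nonneg K0 by auto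
  qed
  show int: "integrable lborel (\<lambda>w. g w * \<phi> w)"
  proof (rule Bochner_Integration.integrable_bound[OF Kgi])
    show "(\<lambda>w. g w * \<phi> w) \<in> borel_measurable lborel" using g_meas phi_meas by simp
    show "AE x in lborel. norm (g x * \<phi> x) \<le> norm (K * g x)"
      using pw by (intro AE_I2) (smt (verit) real_norm_def)
  qed
  have "\<bar>LINT w|lborel. g w * \<phi> w\<bar> \<le> (LINT w|lborel. \<bar>g w * \<phi> w\<bar>)"
    using integral_norm_bound[of lborel "\<lambda>w. g w * \<phi> w"] by simp
  also have "\<dots> \<le> (LINT w|lborel. K * g w)"
    using int Kgi pw by (intro integral_mono) auto
  also have "\<dots> = K" using gint by simp
  finally show "\<bar>LINT w|lborel. g w * \<phi> w\<bar> \<le> K" .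
qed

lemma sigmoid_deriv: "(sigmoid has_real_derivative (exp (- t) / (1 + exp (- t))^2)) (at t)"
proof -
  have nz: "1 + exp (- t) \<noteq> 0" using exp_gt_zero[of "- t"] by linarith
  have "((\<lambda>t. 1 / (1 + exp (- t))) has_real_derivative (exp (- t) / (1 + exp (- t))^2)) (at t)"
    using nz by (auto intro!: derivative_eq_intros simp: power2_eq_square)
  then show ?thesis unfolding sigmoid_def[abs_def] .
qed

lemma sigmoid_deriv_bd: "\<bar>exp (- (t::real)) / (1 + exp (- t))^2\<bar> \<le> 1 / 4"
proof -
  define e where "e = exp (- t)"
  have e0: "0 < e" unfolding e_def using exp_gt_zero by blast
  have "4 * e \<le> (1 + e)^2" using sum_squares_ge_zero[of "1 - e" 0]
    by (simp add: power2_eq_square algebra_simps)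
  then show ?thesis using e0 unfolding e_def[symmetric] by (simp add: divide_simps)
qed

lemma sigmoid_lip_lt: "s < t \<Longrightarrow> \<bar>sigmoid t - sigmoid s\<bar> \<le> (t - s) / 4"
proof -
  assume st: "s < t"
  obtain z where "s < z" "z < t" and eq: "sigmoid t - sigmoid s = (t - s) * (exp (- z) / (1 + exp (- z))^2)"
    using MVT2[OF st, of sigmoid "\<lambda>t. exp (- t) / (1 + exp (- t))^2"] sigmoid_deriv by blast
  have "\<bar>sigmoid t - sigmoid s\<bar> = (t - s) * \<bar>exp (- z) / (1 + exp (- z))^2\<bar>"
    using st unfolding eq by (simp add: abs_mult)
  also have "\<dots> \<le> (t - s) * (1/4)" using st sigmoid_deriv_bd[of z] by (intro mult_left_mono) auto
  finally show ?thesis by simp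
qed

lemma sigmoid_lip: "\<bar>sigmoid s - sigmoid t\<bar> \<le> \<bar>s - t\<bar> / 4"
  using sigmoid_lip_lt[of s t] sigmoid_lip_lt[of t s]
  by (cases s t rule: linorder_cases) (auto simp: abs_minus_commute)




lemma Max_abs_le:
  fixes f :: "'a \<Rightarrow> real"
  assumes "finite U" "U \<noteq> {}" "\<forall>u\<in>U. \<bar>f u\<bar> \<le> K"
  shows "\<bar>Max (f ` U)\<bar> \<le> K"
proof -
  have fi: "finite (f ` U)" "f ` U \<noteq> {}" using assms by auto
  have "Max (f ` U) \<in> f ` U" using Max_in[OF fi] .
  then obtain u where "u \<in> U" "Max (f ` U) = f u" by auto
  then show ?thesis using assms(3) by auto
qed

lemma Max_diff_le:
  fixes f h :: "'a \<Rightarrow> real"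
  assumes fin: "finite U" and ne: "U \<noteq> {}" and d: "\<forall>u\<in>U. \<bar>f u - h u\<bar> \<le> K"
  shows "\<bar>Max (f ` U) - Max (h ` U)\<bar> \<le> K"
proof -
  have fi: "finite (f ` U)" "f ` U \<noteq> {}" "finite (h ` U)" "h ` U \<noteq> {}" using fin ne by auto
  obtain u1 where u1: "u1 \<in> U" "Max (f ` U) = f u1" using Max_in[OF fi(1,2)] by auto
  obtain u2 where u2: "u2 \<in> U" "Max (h ` U) = h u2" using Max_in[OF fi(3,4)] by auto
  have "h u1 \<le> Max (h ` U)" using u1 fin by (intro Max_ge) auto
  moreover have "f u2 \<le> Max (f ` U)" using u2 fin by (intro Max_ge) auto
  moreover have "\<bar>f u1 - h u1\<bar> \<le> K" "\<bar>f u2 - h u2\<bar> \<le> K" using d u1 u2 by auto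
  ultimately show ?thesis using u1 u2 by linarith
qed

lemma key_ineq:
  fixes px py sx sy r \<rho>bar \<beta> \<gamma> h1x h1y h0x h0y W B \<delta> :: real
  assumes "0 \<le> px" "px \<le> 1" "\<bar>px - py\<bar> \<le> \<delta>/4" "\<bar>sx - sy\<bar> \<le> \<delta>/4" "0 \<le> r" "r \<le> \<rho>bar"
    "0 \<le> \<beta>" "0 < \<gamma>" "\<bar>h1x - h1y\<bar> \<le> W" "\<bar>h0x - h0y\<bar> \<le> W" "\<bar>h1y\<bar> \<le> B" "\<bar>h0y\<bar> \<le> B"
  shows "\<bar>(- \<beta> * sx + px * r + \<gamma> * (px * h1x + (1 - px) * h0x))
         - (- \<beta> * sy + py * r + \<gamma> * (py * h1y + (1 - py) * h0y))\<bar>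
         \<le> (\<beta> + \<rho>bar) * \<delta> / 4 + \<gamma> * W + \<gamma> * (\<delta> / 4) * (2 * B)"
proof -
  have eq: "(- \<beta> * sx + px * r + \<gamma> * (px * h1x + (1 - px) * h0x))
         - (- \<beta> * sy + py * r + \<gamma> * (py * h1y + (1 - py) * h0y))
       = - \<beta> * (sx - sy) + (px - py) * r + \<gamma> * (px * (h1x - h1y) + (1 - px) * (h0x - h0y) + (px - py) * (h1y - h0y))"
    by (simp add: algebra_simps)
  have "\<beta> * \<bar>sx - sy\<bar> \<le> \<beta> * (\<delta>/4)" using assms by (intro mult_left_mono) auto
  then have t1: "\<bar>- \<beta> * (sx - sy)\<bar> \<le> \<beta> * (\<delta>/4)" using assms by (simp add: abs_mult)
  have d0: "0 \<le> \<delta>/4" using assms(3) by (smt (verit) abs_ge_zero)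
  have "\<bar>px - py\<bar> * r \<le> (\<delta>/4) * \<rho>bar" by (rule mult_mono) (use assms d0 in auto)
  then have t2: "\<bar>(px - py) * r\<bar> \<le> (\<delta>/4) * \<rho>bar"
    using assms by (simp add: abs_mult)
  have t3: "\<bar>px * (h1x - h1y)\<bar> \<le> px * W" using assms by (simp add: abs_mult mult_left_mono)
  have t4: "\<bar>(1 - px) * (h0x - h0y)\<bar> \<le> (1 - px) * W" using assms by (simp add: abs_mult mult_left_mono)
  have hb: "\<bar>h1y - h0y\<bar> \<le> 2 * B" using assms by linarith
  have "\<bar>px - py\<bar> * \<bar>h1y - h0y\<bar> \<le> (\<delta>/4) * (2 * B)" by (rule mult_mono) (use assms d0 hb in auto)
  then have t5: "\<bar>(px - py) * (h1y - h0y)\<bar> \<le> (\<delta>/4) * (2 * B)"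
    by (simp add: abs_mult)
  have inner: "\<bar>px * (h1x - h1y) + (1 - px) * (h0x - h0y) + (px - py) * (h1y - h0y)\<bar> \<le> W + (\<delta>/4) * (2 * B)"
  proof -
    have "px * W + (1 - px) * W = W" by (simp add: algebra_simps)
    then show ?thesis using t3 t4 t5 by (smt (verit))
  qed
  have t6: "\<bar>\<gamma> * (px * (h1x - h1y) + (1 - px) * (h0x - h0y) + (px - py) * (h1y - h0y))\<bar> \<le> \<gamma> * (W + (\<delta>/4) * (2 * B))"
    using inner assms by (simp add: abs_mult mult_left_mono)
  have rhs: "\<beta>*(\<delta>/4) + (\<delta>/4)*\<rho>bar + \<gamma>*(W + (\<delta>/4)*(2*B)) = (\<beta>+\<rho>bar)*\<delta>/4 + \<gamma>*W + \<gamma>*(\<delta>/4)*(2*B)"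
    by (simp add: algebra_simps)
  show ?thesis unfolding eq rhs[symmetric]
    using t1 t2 t6 abs_triangle_ineq by (smt (verit))
qed

lemma finite_actions: "finite (actions M)" if M0: "0 < M"
proof -
  have "actions M \<subseteq> (\<lambda>(i, v). \<lambda>j. if j = i then v else 0) ` ({..<M} \<times> {0, 1})"
  proof
    fix u assume u: "u \<in> actions M"
    obtain i where i: "i < M" "\<forall>j. j \<noteq> i \<longrightarrow> u j = 0" using act_single[OF u M0] by auto
    have "u i \<in> {0,1}" using u i unfolding actions_def by auto
    moreover have "u = (\<lambda>j. if j = i then u i else 0)" using i by auto
    ultimately show "u \<in> (\<lambda>(i, v). \<lambda>j. if j = i then v else 0) ` ({..<M} \<times> {0, 1})"
      using i by (intro image_eqI[of _ _ "(i, u i)"]) auto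
  qed
  then show ?thesis by (rule finite_subset) auto
qed

lemma zero_action: "(\<lambda>_. 0) \<in> actions M"
  unfolding actions_def by auto




theorem mainTheorem15:
  fixes M :: nat and a abar bbar cbar wbar \<mu>bar \<rho>bar \<sigma>s \<beta> \<beta>0 \<gamma> :: real
    and b c \<mu> \<rho> :: "nat \<Rightarrow> real" and g :: "real \<Rightarrow> real" and J :: "real \<Rightarrow> real"
  assumes M_pos: "0 < M"
    and abar: "0 < abar" "abar < 1" and a: "0 \<le> a" "a \<le> abar"
    and b: "\<forall>i<M. \<bar>b i\<bar> \<le> bbar"
    and c: "\<forall>i<M. \<bar>c i\<bar> \<le> cbar"
    and mu: "\<forall>i<M. \<bar>\<mu> i\<bar> \<le> \<mu>bar"
    and rho: "\<forall>i<M. 0 \<le> \<rho> i \<and> \<rho> i \<le> \<rho>bar"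
    and beta: "0 \<le> \<beta>"
    and gamma: "0 < \<gamma>" "\<gamma> < 1"
    and wbar: "0 < wbar"
    and g_meas: "g \<in> borel_measurable borel"
    and g_nonneg: "\<forall>w. 0 \<le> g w"
    and g_prob: "has_bochner_integral lborel g 1"
    and g_sym: "\<forall>w. g (- w) = g w"
    and g_bdd: "\<forall>w. wbar < \<bar>w\<bar> \<longrightarrow> g w = 0"
    and g_logconc: "log_concave g"
    and g_subgauss: "\<forall>l. (LINT w|lborel. g w * exp (l * w)) \<le> exp (l\<^sup>2 * \<sigma>s\<^sup>2 / 2)"
    and J_meas: "J \<in> borel_measurable borel"
    and J_bdd: "bounded (J ` {-((bbar + cbar + wbar) / (1 - abar)) .. (bbar + cbar + wbar) / (1 - abar)})"
    and J_fix: "\<forall>x \<in> {-((bbar + cbar + wbar) / (1 - abar)) .. (bbar + cbar + wbar) / (1 - abar)}.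
                  J x = bellman M a b c \<mu> g \<beta> \<beta>0 \<rho> \<gamma> J x"
  shows "((\<beta> + \<rho>bar) / (4 * (1 - \<gamma> * abar)) * (1 + 2 * \<gamma> / (1 - \<gamma>)))-lipschitz_on
           {-((bbar + cbar + wbar) / (1 - abar)) .. (bbar + cbar + wbar) / (1 - abar)} J"
proof -
  define C where "C = (bbar + cbar + wbar) / (1 - abar)"
  define X where "X = {-C..C}"
  define L where "L = (\<beta> + \<rho>bar) / (4 * (1 - \<gamma> * abar)) * (1 + 2 * \<gamma> / (1 - \<gamma>))"
  define U where "U = actions M"
  define Q where "Q = (\<lambda>x u. measure_pmf.expectation (adherence M \<mu> x u)
                 (\<lambda>d. reward M \<beta> \<beta>0 \<rho> x d
                      + \<gamma> * (LINT w|lborel. g w * J (dyn M a b c x u d w))))"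
  have finU: "finite U" unfolding U_def using finite_actions M_pos by blast
  have neU: "U \<noteq> {}" unfolding U_def using zero_action by blast
  have Jeq: "J x = Max (Q x ` U)" if "x \<in> X" for x
    using J_fix that unfolding X_def C_def U_def Q_def bellman_def by simp
  have bb: "0 \<le> bbar" using b M_pos by force
  have cb: "0 \<le> cbar" using c M_pos by force
  have rb: "0 \<le> \<rho>bar" using rho M_pos by force
  have C0: "0 \<le> C" unfolding C_def using abar bb cb wbar by simp
  have CC: "abar * C + bbar + cbar + wbar = C" unfolding C_def using abar by (simp add: field_simps)
  have X0: "0 \<in> X" unfolding X_def using C0 by simp
  have memX: "a * x + s + e + w \<in> X" if "x \<in> X" "\<bar>s\<bar> \<le> bbar" "\<bar>e\<bar> \<le> cbar" "\<bar>w\<bar> \<le> wbar" for x s e w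
  proof -
    have xC: "\<bar>x\<bar> \<le> C" using that(1) unfolding X_def by auto
    have "\<bar>a * x\<bar> \<le> abar * C" unfolding abs_mult using a xC abar
      by (intro mult_mono) auto
    then have "\<bar>a * x + s + e + w\<bar> \<le> C" using that CC by linarith
    then show ?thesis unfolding X_def by (auto simp: abs_le_iff)
  qed
  have act: "\<exists>i<M. (\<forall>j. j \<noteq> i \<longrightarrow> u j = 0) \<and> u i \<in> {0,1}" if "u \<in> U" for u
    using act_single[of u M] that M_pos unfolding U_def actions_def by auto
  have bnd: "bdd_above ((\<lambda>x. \<bar>J x\<bar>) ` X)"
  proof -
    obtain K where "\<forall>y\<in>J ` X. norm y \<le> K" using J_bdd unfolding bounded_iff X_def C_def by auto
    then show ?thesis by (intro bdd_aboveI[of _ K]) auto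
  qed
  define B where "B = (SUP x\<in>X. \<bar>J x\<bar>)"
  have JB: "\<bar>J x\<bar> \<le> B" if "x \<in> X" for x unfolding B_def using bnd that by (rule cSUP_upper2) auto
  have B0: "0 \<le> B" using JB[OF X0] by linarith
  have Jz_meas: "(\<lambda>w. J (z + w)) \<in> borel_measurable borel" for z
    by (rule measurable_compose[OF _ J_meas]) simp
  have HfB: "\<bar>Hf g J z\<bar> \<le> B" "integrable lborel (\<lambda>w. g w * J (z + w))"
    if "\<And>w. \<bar>w\<bar> \<le> wbar \<Longrightarrow> z + w \<in> X" for z
    using Hf_gen[OF g_meas g_nonneg g_prob g_bdd wbar Jz_meas, of z B] that JB unfolding Hf_def
    by auto
  have Qform: "Q x u = - \<beta> * sigmoid (\<beta>0 - x) + u i * sigmoid (x + \<mu> i) * \<rho> i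
      + \<gamma> * (u i * sigmoid (x + \<mu> i) * Hf g J (a * x + b i * u i + c i)
             + (1 - u i * sigmoid (x + \<mu> i)) * Hf g J (a * x + b i * u i))"
    if "i < M" "\<forall>j. j \<noteq> i \<longrightarrow> u j = 0" "u i \<in> {0,1}" for x u i
    unfolding Q_def by (rule Q_eq[OF that])
  have p01: "0 \<le> u i * sigmoid (x + \<mu> i)" "u i * sigmoid (x + \<mu> i) \<le> 1" if "u i \<in> {0,1}" for u i x
    using that sigmoid_bounds[of "x + \<mu> i"] by auto
  have Hpts: "\<bar>Hf g J (a * x + b i * u i + c i)\<bar> \<le> B \<and> \<bar>Hf g J (a * x + b i * u i)\<bar> \<le> B"
    if "x \<in> X" "i < M" "u i \<in> {0,1}" for x u i
  proof -
    have sb: "\<bar>b i * u i\<bar> \<le> bbar" using that b by auto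
    have ci: "\<bar>c i\<bar> \<le> cbar" using that c by auto
    show ?thesis
      using HfB(1)[of "a * x + b i * u i + c i"] HfB(1)[of "a * x + b i * u i"]
        memX[OF that(1) sb ci] memX[OF that(1) sb, of 0] cb by auto
  qed
  have Jbd: "\<bar>J x\<bar> \<le> (\<beta> + \<rho>bar) + \<gamma> * B" if "x \<in> X" for x
  proof -
    have "\<forall>u\<in>U. \<bar>Q x u\<bar> \<le> (\<beta> + \<rho>bar) + \<gamma> * B"
    proof
      fix u assume "u \<in> U"
      then obtain i where i: "i < M" "\<forall>j. j \<noteq> i \<longrightarrow> u j = 0" "u i \<in> {0,1}" using act by blast
      define p where "p = u i * sigmoid (x + \<mu> i)"
      define h1 where "h1 = Hf g J (a * x + b i * u i + c i)"
      define h0 where "h0 = Hf g J (a * x + b i * u i)"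
      have pp: "0 \<le> p" "p \<le> 1" unfolding p_def using p01[of u i x, OF i(3)] by auto
      have hh: "\<bar>h1\<bar> \<le> B" "\<bar>h0\<bar> \<le> B" unfolding h1_def h0_def using Hpts[of x i u, OF that i(1,3)] by auto
      have "\<bar>p * h1\<bar> \<le> p * B" using pp hh by (simp add: abs_mult mult_left_mono)
      moreover have "\<bar>(1 - p) * h0\<bar> \<le> (1 - p) * B" using pp hh by (simp add: abs_mult mult_left_mono)
      moreover have "p * B + (1 - p) * B = B" by (simp add: algebra_simps)
      ultimately have cv: "\<bar>p * h1 + (1 - p) * h0\<bar> \<le> B" by (smt (verit))
      have g1: "\<bar>\<gamma> * (p * h1 + (1 - p) * h0)\<bar> \<le> \<gamma> * B" using cv gamma by (simp add: abs_mult mult_left_mono)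
      have s1: "\<beta> * sigmoid (\<beta>0 - x) \<le> \<beta> * 1" using beta sigmoid_bounds[of "\<beta>0 - x"] by (intro mult_left_mono) auto
      have s0: "0 \<le> \<beta> * sigmoid (\<beta>0 - x)" using beta sigmoid_bounds[of "\<beta>0 - x"] by simp
      have r1: "p * \<rho> i \<le> 1 * \<rho>bar" using pp rho i by (intro mult_mono) auto
      have r0: "0 \<le> p * \<rho> i" using pp rho i by simp
      have "Q x u = - \<beta> * sigmoid (\<beta>0 - x) + p * \<rho> i + \<gamma> * (p * h1 + (1 - p) * h0)"
        unfolding Qform[OF i] p_def h1_def h0_def ..
      moreover have "- \<beta> * sigmoid (\<beta>0 - x) = - (\<beta> * sigmoid (\<beta>0 - x))" by simp
      ultimately show "\<bar>Q x u\<bar> \<le> (\<beta> + \<rho>bar) + \<gamma> * B" using g1 s1 s0 r1 r0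
        unfolding abs_le_iff by simp
    qed
    then show ?thesis unfolding Jeq[OF that] by (rule Max_abs_le[OF finU neU])
  qed
  have "(SUP x\<in>X. \<bar>J x\<bar>) \<le> (\<beta> + \<rho>bar) + \<gamma> * B"
    using Jbd X0 by (intro cSUP_least) auto
  then have "B \<le> (\<beta> + \<rho>bar) + \<gamma> * B" unfolding B_def[symmetric] .
  then have BR: "(1 - \<gamma>) * B \<le> \<beta> + \<rho>bar" by (simp add: algebra_simps)
  have "\<gamma> * abar < \<gamma> * 1" using gamma abar by (intro mult_strict_left_mono) auto
  then have gab: "\<gamma> * abar < 1" using gamma by linarith
  have L0: "0 \<le> L" unfolding L_def using beta rb gamma abar by (intro mult_nonneg_nonneg divide_nonneg_pos) (use gab gamma in auto)
  have coef: "(\<beta> + \<rho>bar) / 4 + \<gamma> * a * L + \<gamma> * B / 2 \<le> L"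
  proof -
    have g1: "0 < 1 - \<gamma>" "0 < 1 - \<gamma> * abar" using gamma abar by (use gab gamma in auto)
    have "L * (1 - \<gamma> * abar) = (\<beta> + \<rho>bar) / 4 + \<gamma> * (\<beta> + \<rho>bar) / (2 * (1 - \<gamma>))"
    proof -
      have n1: "1 - \<gamma> \<noteq> 0" "1 - \<gamma> * abar \<noteq> 0" using g1 by auto
      have "L * (1 - \<gamma> * abar) = (\<beta> + \<rho>bar) / 4 * (1 + 2 * \<gamma> / (1 - \<gamma>))"
      proof -
        have gen: "K / (4 * k) * m * k = K / 4 * m" if "k \<noteq> 0" for K k m :: real
          using that by (simp add: field_simps)
        show ?thesis unfolding L_def by (rule gen[OF n1(2)])
      qed
      also have "\<dots> = (\<beta> + \<rho>bar) / 4 + \<gamma> * (\<beta> + \<rho>bar) / (2 * (1 - \<gamma>))"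
        using n1 by (simp add: field_simps)
      finally show ?thesis .
    qed
    moreover have "\<gamma> * B / 2 \<le> \<gamma> * (\<beta> + \<rho>bar) / (2 * (1 - \<gamma>))"
    proof -
      have "B \<le> (\<beta> + \<rho>bar) / (1 - \<gamma>)" using BR g1 by (simp add: field_simps)
      then have gb: "\<gamma> * B \<le> \<gamma> * ((\<beta> + \<rho>bar) / (1 - \<gamma>))" using gamma by (intro mult_left_mono) auto
      have eq: "\<gamma> * (\<beta> + \<rho>bar) / (2 * (1 - \<gamma>)) = \<gamma> * ((\<beta> + \<rho>bar) / (1 - \<gamma>)) / 2" by simp
      have h: "\<gamma> * B / 2 \<le> \<gamma> * ((\<beta> + \<rho>bar) / (1 - \<gamma>)) / 2" using gb by (intro divide_right_mono) auto
      show ?thesis unfolding eq by (rule h)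
    qed
    moreover have "\<gamma> * a * L \<le> \<gamma> * abar * L" using L0 gamma a by (intro mult_right_mono) auto
    moreover have "L * (1 - \<gamma> * abar) = L - \<gamma> * abar * L" by (simp add: algebra_simps)
    ultimately show ?thesis by linarith
  qed
  have P: "\<forall>x\<in>X. \<forall>y\<in>X. \<bar>J x - J y\<bar> \<le> L * \<bar>x - y\<bar> + \<gamma> ^ n * (2 * B)" for n
  proof (induct n)
    case 0
    show ?case using JB L0 by (auto intro!: add_increasing) (smt (verit) JB)
  next
    case (Suc n)
    show ?case
    proof (intro ballI)
      fix x y assume x: "x \<in> X" and y: "y \<in> X"
      define \<delta> where "\<delta> = \<bar>x - y\<bar>"
      define W where "W = L * (a * \<delta>) + \<gamma> ^ n * (2 * B)"
      have hdiff: "\<bar>Hf g J (a * x + s + e) - Hf g J (a * y + s + e)\<bar> \<le> W"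
        if "\<bar>s\<bar> \<le> bbar" "\<bar>e\<bar> \<le> cbar" for s e
      proof -
        have inX: "a * x + s + e + w \<in> X" "a * y + s + e + w \<in> X" if "\<bar>w\<bar> \<le> wbar" for w
          using memX[OF x \<open>\<bar>s\<bar> \<le> bbar\<close> \<open>\<bar>e\<bar> \<le> cbar\<close> that] memX[OF y \<open>\<bar>s\<bar> \<le> bbar\<close> \<open>\<bar>e\<bar> \<le> cbar\<close> that] by auto
        have i1: "integrable lborel (\<lambda>w. g w * J (a * x + s + e + w))" using HfB(2) inX(1) by blast
        have i2: "integrable lborel (\<lambda>w. g w * J (a * y + s + e + w))" using HfB(2) inX(2) by blast
        have "Hf g J (a * x + s + e) - Hf g J (a * y + s + e)
            = (LINT w|lborel. g w * (J (a * x + s + e + w) - J (a * y + s + e + w)))"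
          unfolding Hf_def using Bochner_Integration.integral_diff[OF i1 i2] by (simp add: algebra_simps)
        also have "\<bar>\<dots>\<bar> \<le> W"
        proof (rule Hf_gen(2)[OF g_meas g_nonneg g_prob g_bdd wbar])
          show "(\<lambda>w. J (a * x + s + e + w) - J (a * y + s + e + w)) \<in> borel_measurable borel"
            using Jz_meas[of "a * x + s + e"] Jz_meas[of "a * y + s + e"] by simp
          show "\<forall>w. \<bar>w\<bar> \<le> wbar \<longrightarrow> \<bar>J (a * x + s + e + w) - J (a * y + s + e + w)\<bar> \<le> W"
          proof (intro allI impI)
            fix w assume "\<bar>w\<bar> \<le> wbar"
            then have "\<bar>J (a * x + s + e + w) - J (a * y + s + e + w)\<bar>
                \<le> L * \<bar>(a * x + s + e + w) - (a * y + s + e + w)\<bar> + \<gamma> ^ n * (2 * B)"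
              using Suc inX by blast
            also have "\<bar>(a * x + s + e + w) - (a * y + s + e + w)\<bar> = a * \<delta>"
              unfolding \<delta>_def using a by (simp add: abs_mult flip: right_diff_distrib)
            finally show "\<bar>J (a * x + s + e + w) - J (a * y + s + e + w)\<bar> \<le> W" unfolding W_def .
          qed
        qed
        finally show ?thesis .
      qed
      have "\<forall>u\<in>U. \<bar>Q x u - Q y u\<bar> \<le> (\<beta> + \<rho>bar) * \<delta> / 4 + \<gamma> * W + \<gamma> * (\<delta> / 4) * (2 * B)"
      proof
        fix u assume "u \<in> U"
        then obtain i where i: "i < M" "\<forall>j. j \<noteq> i \<longrightarrow> u j = 0" "u i \<in> {0,1}" using act by blast
        have sb: "\<bar>b i * u i\<bar> \<le> bbar" using i b by auto
        have ci: "\<bar>c i\<bar> \<le> cbar" using i c by auto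
        have pd: "\<bar>u i * sigmoid (x + \<mu> i) - u i * sigmoid (y + \<mu> i)\<bar> \<le> \<delta> / 4"
          using i(3) sigmoid_lip[of "x + \<mu> i" "y + \<mu> i"] unfolding \<delta>_def by auto
        have sd: "\<bar>sigmoid (\<beta>0 - x) - sigmoid (\<beta>0 - y)\<bar> \<le> \<delta> / 4"
          using sigmoid_lip[of "\<beta>0 - x" "\<beta>0 - y"] unfolding \<delta>_def by (simp add: abs_minus_commute)
        have h1: "\<bar>Hf g J (a * x + b i * u i + c i) - Hf g J (a * y + b i * u i + c i)\<bar> \<le> W"
          using hdiff[OF sb ci] .
        have h0: "\<bar>Hf g J (a * x + b i * u i) - Hf g J (a * y + b i * u i)\<bar> \<le> W"
          using hdiff[OF sb, of 0] cb by simp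
        show "\<bar>Q x u - Q y u\<bar> \<le> (\<beta> + \<rho>bar) * \<delta> / 4 + \<gamma> * W + \<gamma> * (\<delta> / 4) * (2 * B)"
          unfolding Qform[OF i, of x] Qform[OF i, of y]
          by (rule key_ineq[OF p01[of u i x, OF i(3)] pd sd _ _ beta gamma(1) h1 h0])
             (use rho i Hpts[of y i u, OF y i(1,3)] in auto)
      qed
      then have "\<bar>J x - J y\<bar> \<le> (\<beta> + \<rho>bar) * \<delta> / 4 + \<gamma> * W + \<gamma> * (\<delta> / 4) * (2 * B)"
        unfolding Jeq[OF x] Jeq[OF y] by (rule Max_diff_le[OF finU neU])
      also have "\<dots> = \<delta> * ((\<beta> + \<rho>bar) / 4 + \<gamma> * a * L + \<gamma> * B / 2) + \<gamma> ^ Suc n * (2 * B)"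
        unfolding W_def by (simp add: algebra_simps)
      also have "\<dots> \<le> \<delta> * L + \<gamma> ^ Suc n * (2 * B)"
        using coef unfolding \<delta>_def by (simp add: mult_left_mono)
      finally show "\<bar>J x - J y\<bar> \<le> L * \<bar>x - y\<bar> + \<gamma> ^ Suc n * (2 * B)" unfolding \<delta>_def by (simp add: mult.commute)
    qed
  qed
  have lip: "L-lipschitz_on X J"
  proof (rule lipschitz_onI[OF _ L0])
    fix x y assume x: "x \<in> X" and y: "y \<in> X"
    have lim: "(\<lambda>n. L * \<bar>x - y\<bar> + \<gamma> ^ n * (2 * B)) \<longlonglongrightarrow> L * \<bar>x - y\<bar> + 0 * (2 * B)"
      using gamma by (intro tendsto_intros LIMSEQ_power_zero) auto
    have "\<bar>J x - J y\<bar> \<le> L * \<bar>x - y\<bar>"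
      using LIMSEQ_le_const[OF lim] P x y by auto
    then show "dist (J x) (J y) \<le> L * dist x y" by (simp add: dist_real_def)
  qed
  then show ?thesis unfolding L_def X_def C_def .
qed


end
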